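(* Let $\rho\in[0,1]$, let $U_0,U_1$ be random vectors in $\mathbb{R}^d$, let $\Pi\in\mathbb{R}^{d\times d}$ be positive semidefinite (i.e. $v^T\Pi v\ge0$ for all $v\in\mathbb{R}^d$), and let $\Phi:\mathbb{R}\to\mathbb{R}$ be convex and non-increasing. Assume the expectations below are finite for all $\theta$. Then the performative risk $$\mathrm{PR}(\theta)=\rho\,\mathbb{E}\big[\Phi(U_1^T\theta)\big]+(1-\rho)\,\mathbb{E}\big[\Phi\big(-(U_0+\Pi\theta)^T\theta\big)\big]$$ is a convex function of $\theta\in\mathbb{R}^d$.
   Context: This is the performative risk of a linear classifier $f_\theta(x)=x^T\theta$ with convex surrogate loss $\Phi$ in binary classification where $\mathbb{P}_\theta(Y=1)=\rho$ is fixed, class-1 covariates are distributed as $U_1$ (unaffected by the deployed model), and class-0 covariates are distributed as $U_0+\Pi\theta$ (a linear performative shift). Examples of admissible $\Phi$ include the hinge, logistic and exponential losses. *)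

theory Defs
  imports "HOL-Probability.Probability"
begin

definition perf_risk ::
  "'w measure \<Rightarrow> real \<Rightarrow> ('w \<Rightarrow> real^'d) \<Rightarrow> ('w \<Rightarrow> real^'d) \<Rightarrow> real^'d^'d
     \<Rightarrow> (real \<Rightarrow> real) \<Rightarrow> real^'d \<Rightarrow> real" where
  "perf_risk M \<rho> U0 U1 Pi_mat \<Phi> \<theta> =
     \<rho> * (\<integral>\<omega>. \<Phi> (U1 \<omega> \<bullet> \<theta>) \<partial>M)
     + (1 - \<rho>) * (\<integral>\<omega>. \<Phi> (- ((U0 \<omega> + Pi_mat *v \<theta>) \<bullet> \<theta>)) \<partial>M)"

end

theory Submission
  imports Defs
begin

lemma quad_identity:
  fixes P :: "real^'d^'d" and x y :: "real^'d" and t :: real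
  shows "(1 - t) * (x \<bullet> (P *v x)) + t * (y \<bullet> (P *v y))
     - (((1 - t) *\<^sub>R x + t *\<^sub>R y) \<bullet> (P *v ((1 - t) *\<^sub>R x + t *\<^sub>R y)))
     = t * (1 - t) * ((x - y) \<bullet> (P *v (x - y)))"
  by (simp add: matrix_vector_right_distrib matrix_vector_mult_diff_distrib
      matrix_vector_mult_scaleR inner_add_left inner_add_right inner_diff_left inner_diff_right
      algebra_simps power2_eq_square)

lemma quad_convex:
  fixes P :: "real^'d^'d" and x y :: "real^'d" and t :: real
  assumes psd: "\<And>v. v \<bullet> (P *v v) \<ge> 0" and "0 \<le> t" "t \<le> 1"
  shows "(((1 - t) *\<^sub>R x + t *\<^sub>R y) \<bullet> (P *v ((1 - t) *\<^sub>R x + t *\<^sub>R y)))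
     \<le> (1 - t) * (x \<bullet> (P *v x)) + t * (y \<bullet> (P *v y))"
proof -
  have "0 \<le> t * (1 - t) * ((x - y) \<bullet> (P *v (x - y)))"
    using assms by (intro mult_nonneg_nonneg) auto
  with quad_identity[of t x P y] show ?thesis by linarith
qed

lemma integral_convex:
  fixes f :: "real^'d \<Rightarrow> 'w \<Rightarrow> real"
  assumes int: "\<And>\<theta>. integrable M (f \<theta>)"
    and cv: "\<And>\<omega>. convex_on UNIV (\<lambda>\<theta>. f \<theta> \<omega>)"
  shows "convex_on UNIV (\<lambda>\<theta>. \<integral>\<omega>. f \<theta> \<omega> \<partial>M)"
proof (rule convex_onI)
  fix t :: real and x y :: "real^'d"
  assume t: "0 < t" "t < 1"
  have "(\<integral>\<omega>. f ((1 - t) *\<^sub>R x + t *\<^sub>R y) \<omega> \<partial>M)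
      \<le> (\<integral>\<omega>. (1 - t) * f x \<omega> + t * f y \<omega> \<partial>M)"
    using t int by (intro integral_mono) (auto intro!: convex_onD[OF cv])
  also have "\<dots> = (1 - t) * (\<integral>\<omega>. f x \<omega> \<partial>M) + t * (\<integral>\<omega>. f y \<omega> \<partial>M)"
    using int by simp
  finally show "(\<integral>\<omega>. f ((1 - t) *\<^sub>R x + t *\<^sub>R y) \<omega> \<partial>M)
      \<le> (1 - t) * (\<integral>\<omega>. f x \<omega> \<partial>M) + t * (\<integral>\<omega>. f y \<omega> \<partial>M)" .
qed simp

theorem theorem2:
  fixes M :: "'w measure" and \<rho> :: real
    and U0 U1 :: "'w \<Rightarrow> real^'d" and Pi_mat :: "real^'d^'d" and \<Phi> :: "real \<Rightarrow> real"
  assumes "prob_space M"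
    and "\<rho> \<in> {0..1}"
    and "U0 \<in> borel_measurable M" and "U1 \<in> borel_measurable M"
    and "\<And>v. v \<bullet> (Pi_mat *v v) \<ge> 0"
    and "convex_on UNIV \<Phi>" and "antimono \<Phi>"
    and "\<And>\<theta>. integrable M (\<lambda>\<omega>. \<Phi> (U1 \<omega> \<bullet> \<theta>))"
    and "\<And>\<theta>. integrable M (\<lambda>\<omega>. \<Phi> (- ((U0 \<omega> + Pi_mat *v \<theta>) \<bullet> \<theta>)))"
  shows "convex_on UNIV (perf_risk M \<rho> U0 U1 Pi_mat \<Phi>)"
proof -
  note cvP = assms(6) and am = assms(7) and psd = assms(5)
  have c1: "convex_on UNIV (\<lambda>\<theta>. \<integral>\<omega>. \<Phi> (U1 \<omega> \<bullet> \<theta>) \<partial>M)"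
  proof (rule integral_convex[OF assms(8)])
    fix \<omega>
    show "convex_on UNIV (\<lambda>\<theta>. \<Phi> (U1 \<omega> \<bullet> \<theta>))"
    proof (rule convex_onI)
      fix t :: real and x y :: "real^'d"
      assume t: "0 < t" "t < 1"
      have "U1 \<omega> \<bullet> ((1 - t) *\<^sub>R x + t *\<^sub>R y) = (1 - t) *\<^sub>R (U1 \<omega> \<bullet> x) + t *\<^sub>R (U1 \<omega> \<bullet> y)"
        by (simp add: inner_add_right)
      then show "\<Phi> (U1 \<omega> \<bullet> ((1 - t) *\<^sub>R x + t *\<^sub>R y)) \<le> (1 - t) * \<Phi> (U1 \<omega> \<bullet> x) + t * \<Phi> (U1 \<omega> \<bullet> y)"
        using t by (simp only:) (rule convex_onD[OF cvP], auto)
    qed simp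
  qed
  have c2: "convex_on UNIV (\<lambda>\<theta>. \<integral>\<omega>. \<Phi> (- ((U0 \<omega> + Pi_mat *v \<theta>) \<bullet> \<theta>)) \<partial>M)"
  proof (rule integral_convex[OF assms(9)])
    fix \<omega>
    define g where "g \<theta> = - (U0 \<omega> \<bullet> \<theta>) - \<theta> \<bullet> (Pi_mat *v \<theta>)" for \<theta>
    have geq: "- ((U0 \<omega> + Pi_mat *v \<theta>) \<bullet> \<theta>) = g \<theta>" for \<theta>
      by (simp add: g_def inner_add_left inner_add_right inner_commute)
    show "convex_on UNIV (\<lambda>\<theta>. \<Phi> (- ((U0 \<omega> + Pi_mat *v \<theta>) \<bullet> \<theta>)))"
      unfolding geq
    proof (rule convex_onI)
      fix t :: real and x y :: "real^'d"
      assume t: "0 < t" "t < 1"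
      have "(1 - t) *\<^sub>R g x + t *\<^sub>R g y \<le> g ((1 - t) *\<^sub>R x + t *\<^sub>R y)"
        using quad_convex[OF psd, of t x y] t
        by (simp add: g_def inner_add_right algebra_simps)
      then have "\<Phi> (g ((1 - t) *\<^sub>R x + t *\<^sub>R y)) \<le> \<Phi> ((1 - t) *\<^sub>R g x + t *\<^sub>R g y)"
        using am by (simp add: antimono_def)
      also have "\<dots> \<le> (1 - t) * \<Phi> (g x) + t * \<Phi> (g y)"
        using t by (intro convex_onD[OF cvP]) auto
      finally show "\<Phi> (g ((1 - t) *\<^sub>R x + t *\<^sub>R y)) \<le> (1 - t) * \<Phi> (g x) + t * \<Phi> (g y)" .
    qed simp
  qed
  have r: "0 \<le> \<rho>" "0 \<le> 1 - \<rho>" using assms(2) by auto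
  have "convex_on UNIV (\<lambda>\<theta>. \<rho> * (\<integral>\<omega>. \<Phi> (U1 \<omega> \<bullet> \<theta>) \<partial>M)
     + (1 - \<rho>) * (\<integral>\<omega>. \<Phi> (- ((U0 \<omega> + Pi_mat *v \<theta>) \<bullet> \<theta>)) \<partial>M))"
    by (intro convex_on_add convex_on_cmul c1 c2 r)
  then show ?thesis unfolding perf_risk_def[abs_def] .
qed

end
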